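(* Let $K\ge2$, $0\le\beta_k\le1$ and $0<\varpi<2$. Let $X,Y$ be random variables on $K$-letter alphabets $\{x_1,\dots,x_K\}$, $\{y_1,\dots,y_K\}$ whose joint law is $p(y_j)p(x_i\mid y_j)$, where $p(y)$ ranges over all distributions on $\{y_1,\dots,y_K\}$ and the backward matrix is fixed as $p(x_i\mid y_i)=1-\beta_k$ and $p(x_i\mid y_j)=\beta_k/(K-1)$ for $i\ne j$. Then $$\max\big\{L(\varpi,X)-L(\varpi,X\mid Y)\big\}=e^{\varpi(K-1)/K}-\Big((1-\beta_k)e^{\varpi\beta_k}+\beta_k e^{\varpi\left(1-\frac{\beta_k}{K-1}\right)}\Big),$$ where the maximum is over the distributions $p(y)$ (equivalently over the induced input distributions $p(x_i)=\sum_j p(y_j)p(x_i\mid y_j)$), and it is attained when $X$ (equivalently $Y$) is uniform.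
   Context: For a discrete random variable $X$ with distribution $\{p(x_1),\dots,p(x_n)\}$ the message importance measure (MIM) is $L(\varpi,X)=\sum_i p(x_i)e^{\varpi(1-p(x_i))}$. For a pair $(X,Y)$ the conditional message importance measure (CMIM) is $L(\varpi,X\mid Y)=\sum_{j:\,p(y_j)>0} p(y_j)\sum_i p(x_i\mid y_j)e^{\varpi(1-p(x_i\mid y_j))}$. *)

theory Defs
  imports Complex_Main
begin

text \<open>Alphabets {x_1..x_K}, {y_1..y_K} are indexed by {..<K}.
  A distribution on a K-letter alphabet is a nonnegative function summing to 1.\<close>

definition is_dist :: "nat \<Rightarrow> (nat \<Rightarrow> real) \<Rightarrow> bool" where
  "is_dist K p \<longleftrightarrow> (\<forall>j<K. 0 \<le> p j) \<and> (\<Sum>j<K. p j) = 1"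

definition MIM :: "nat \<Rightarrow> real \<Rightarrow> (nat \<Rightarrow> real) \<Rightarrow> real" where
  "MIM K w p = (\<Sum>i<K. p i * exp (w * (1 - p i)))"

text \<open>Conditional MIM; c i j = p(x_i | y_j), q j = p(y_j).\<close>
definition CMIM :: "nat \<Rightarrow> real \<Rightarrow> (nat \<Rightarrow> real) \<Rightarrow> (nat \<Rightarrow> nat \<Rightarrow> real) \<Rightarrow> real" where
  "CMIM K w q c = (\<Sum>j\<in>{j. j < K \<and> 0 < q j}. q j * (\<Sum>i<K. c i j * exp (w * (1 - c i j))))"

definition bwd :: "nat \<Rightarrow> real \<Rightarrow> nat \<Rightarrow> nat \<Rightarrow> real" where
  "bwd K b i j = (if i = j then 1 - b else b / (real K - 1))"

definition induced :: "nat \<Rightarrow> (nat \<Rightarrow> real) \<Rightarrow> (nat \<Rightarrow> nat \<Rightarrow> real) \<Rightarrow> nat \<Rightarrow> real" where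
  "induced K q c i = (\<Sum>j<K. q j * c i j)"

end

theory Submission
  imports Defs "HOL-Analysis.Convex"
begin

lemma g_convex:
  assumes "0 < w" "w < 2"
  shows "convex_on {0..1} (\<lambda>t::real. - (t * exp (w * (1 - t))))"
proof (rule f''_ge0_imp_convex[where f'="\<lambda>t. (w*t - 1) * exp (w * (1 - t))"
        and f''="\<lambda>t. w * (2 - w*t) * exp (w * (1 - t))"])
  show "convex {0..(1::real)}" by simp
  fix x :: real
  show "((\<lambda>t::real. - (t * exp (w * (1 - t)))) has_real_derivative (w*x - 1) * exp (w * (1 - x))) (at x)"
    by (auto intro!: derivative_eq_intros simp: algebra_simps)
  show "((\<lambda>t. (w*t - 1) * exp (w * (1 - t))) has_real_derivative w * (2 - w*x) * exp (w * (1 - x))) (at x)"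
    by (auto intro!: derivative_eq_intros simp: algebra_simps)
  assume "x \<in> {0..1}"
  then have "w * x \<le> w" using assms by (simp add: mult_left_le)
  then have "w * x < 2" using assms by linarith
  then show "0 \<le> w * (2 - w*x) * exp (w * (1 - x))" using assms by (intro mult_nonneg_nonneg) auto
qed

lemma MIM_le:
  assumes "0 < w" "w < 2" "K \<ge> 1" "is_dist K p"
  shows "MIM K w p \<le> exp (w * (real K - 1) / real K)"
proof -
  have nn: "\<And>i. i < K \<Longrightarrow> 0 \<le> p i" and s: "(\<Sum>i<K. p i) = 1"
    using assms(4) by (auto simp: is_dist_def)
  have le1: "p i \<le> 1" if "i < K" for i
  proof -
    have "p i \<le> (\<Sum>i<K. p i)"
      by (rule member_le_sum) (use that nn in auto)
    with s show ?thesis by simp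
  qed
  let ?g = "\<lambda>t::real. - (t * exp (w * (1 - t)))"
  have "?g (\<Sum>i\<in>{..<K}. (1 / real K) *\<^sub>R p i) \<le> (\<Sum>i\<in>{..<K}. (1 / real K) * ?g (p i))"
    by (rule convex_on_sum[OF _ _ g_convex[OF assms(1,2)]])
       (use assms(3) nn le1 in \<open>auto simp: lessThan_empty_iff\<close>)
  moreover have "(\<Sum>i\<in>{..<K}. (1 / real K) *\<^sub>R p i) = 1 / real K"
    using s by (simp add: sum_divide_distrib[symmetric])
  moreover have "(\<Sum>i\<in>{..<K}. (1 / real K) * ?g (p i)) = - MIM K w p / real K"
    by (simp add: MIM_def sum_divide_distrib[symmetric] sum_negf)
  ultimately have "- (1 / real K * exp (w * (1 - 1 / real K))) \<le> - MIM K w p / real K"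
    by simp
  then have "MIM K w p \<le> exp (w * (1 - 1 / real K))"
    using assms(3) by (simp add: field_simps)
  also have "w * (1 - 1 / real K) = w * (real K - 1) / real K"
    using assms(3) by (simp add: field_simps)
  finally show ?thesis .
qed

theorem proposition3:
  fixes K :: nat and b w :: real
  assumes "K \<ge> 2" and "0 \<le> b" and "b \<le> 1" and "0 < w" and "w < 2"
  defines "gain \<equiv> (\<lambda>q. MIM K w (induced K q (bwd K b)) - CMIM K w q (bwd K b))"
      and "val \<equiv> exp (w * (real K - 1) / real K)
                 - ((1 - b) * exp (w * b) + b * exp (w * (1 - b / (real K - 1))))"
  shows "(\<forall>q. is_dist K q \<longrightarrow> gain q \<le> val)
       \<and> is_dist K (\<lambda>j. 1 / real K) \<and> gain (\<lambda>j. 1 / real K) = val"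
proof -
  define C where "C = (1 - b) * exp (w * b) + b * exp (w * (1 - b / (real K - 1)))"
  have K1: "real K - 1 > 0" using assms(1) by simp
  have inner: "(\<Sum>i<K. bwd K b i j * exp (w * (1 - bwd K b i j))) = C" if "j < K" for j
  proof -
    have "{..<K} = insert j ({..<K} - {j})" using that by auto
    then have "(\<Sum>i<K. bwd K b i j * exp (w * (1 - bwd K b i j)))
        = bwd K b j j * exp (w * (1 - bwd K b j j))
          + (\<Sum>i\<in>{..<K} - {j}. bwd K b i j * exp (w * (1 - bwd K b i j)))"
      by (metis (no_types, lifting) Diff_iff finite_Diff finite_lessThan insertI1 sum.insert)
    also have "(\<Sum>i\<in>{..<K} - {j}. bwd K b i j * exp (w * (1 - bwd K b i j)))
        = (\<Sum>i\<in>{..<K} - {j}. b / (real K - 1) * exp (w * (1 - b / (real K - 1))))"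
      by (rule sum.cong) (auto simp: bwd_def)
    also have "\<dots> = (real K - 1) * (b / (real K - 1) * exp (w * (1 - b / (real K - 1))))"
      using that by (simp add: card_Diff_singleton of_nat_diff)
    also have "\<dots> = b * exp (w * (1 - b / (real K - 1)))" using K1 by simp
    finally show ?thesis by (simp add: C_def bwd_def algebra_simps)
  qed
  have colsum: "(\<Sum>i<K. bwd K b i j) = 1" if "j < K" for j
  proof -
    have "{..<K} = insert j ({..<K} - {j})" using that by auto
    then have "(\<Sum>i<K. bwd K b i j) = bwd K b j j + (\<Sum>i\<in>{..<K} - {j}. bwd K b i j)"
      by (metis (no_types, lifting) Diff_iff finite_Diff finite_lessThan insertI1 sum.insert)
    also have "(\<Sum>i\<in>{..<K} - {j}. bwd K b i j) = (\<Sum>i\<in>{..<K} - {j}. b / (real K - 1))"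
      by (rule sum.cong) (auto simp: bwd_def)
    also have "\<dots> = b" using that K1 by (simp add: card_Diff_singleton of_nat_diff)
    finally show ?thesis by (simp add: bwd_def)
  qed
  have bwd_nn: "0 \<le> bwd K b i j" for i j using assms(2,3) K1 by (simp add: bwd_def)
  have CM: "CMIM K w q (bwd K b) = C" if "is_dist K q" for q
  proof -
    have nn: "\<And>j. j < K \<Longrightarrow> 0 \<le> q j" and s: "(\<Sum>j<K. q j) = 1"
      using that by (auto simp: is_dist_def)
    have "CMIM K w q (bwd K b) = (\<Sum>j\<in>{j. j < K \<and> 0 < q j}. q j * C)"
      unfolding CMIM_def by (rule sum.cong) (auto simp: inner)
    also have "\<dots> = (\<Sum>j<K. q j * C)"
    proof (rule sum.mono_neutral_left)
      show "\<forall>i\<in>{..<K} - {j. j < K \<and> 0 < q j}. q i * C = 0"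
        using nn by (auto simp: order_le_less)
    qed auto
    also have "\<dots> = C" using s by (simp add: sum_distrib_right[symmetric])
    finally show ?thesis .
  qed
  have ind: "is_dist K (induced K q (bwd K b))" if "is_dist K q" for q
  proof -
    have nn: "\<And>j. j < K \<Longrightarrow> 0 \<le> q j" and s: "(\<Sum>j<K. q j) = 1"
      using that by (auto simp: is_dist_def)
    have "(\<Sum>i<K. induced K q (bwd K b) i) = (\<Sum>j<K. q j * (\<Sum>i<K. bwd K b i j))"
      unfolding induced_def by (subst sum.swap) (simp add: sum_distrib_left)
    also have "\<dots> = 1" using s colsum by simp
    finally show ?thesis
      unfolding is_dist_def using nn bwd_nn
      by (auto simp: induced_def intro!: sum_nonneg)
  qed
  have unif: "is_dist K (\<lambda>j. 1 / real K)" using assms(1) by (simp add: is_dist_def)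
  have part1: "\<forall>q. is_dist K q \<longrightarrow> gain q \<le> val"
  proof (intro allI impI)
    fix q assume q: "is_dist K q"
    show "gain q \<le> val"
      unfolding gain_def val_def using CM[OF q] MIM_le[OF assms(4,5) _ ind[OF q]] assms(1)
      by (simp add: C_def)
  qed
  have iu: "induced K (\<lambda>j. 1 / real K) (bwd K b) i = 1 / real K" if "i < K" for i
  proof -
    have "(\<Sum>j<K. bwd K b i j) = (\<Sum>j<K. bwd K b j i)" by (simp add: bwd_def eq_commute)
    then show ?thesis using colsum[OF that]
      by (simp add: induced_def sum_divide_distrib[symmetric])
  qed
  have "MIM K w (induced K (\<lambda>j. 1 / real K) (bwd K b)) = (\<Sum>i<K. 1 / real K * exp (w * (1 - 1 / real K)))"
    unfolding MIM_def by (rule sum.cong) (auto simp: iu)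
  also have "\<dots> = exp (w * (real K - 1) / real K)"
    using assms(1) by (simp add: field_simps)
  finally have "gain (\<lambda>j. 1 / real K) = val"
    unfolding gain_def val_def using CM[OF unif] by (simp add: C_def)
  with part1 unif show ?thesis by simp
qed

end
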